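(* Let $U$ be a finite nonempty set, $(T,I,N)$ a residual triplet, $\widetilde{R}$ a $T$-preorder relation on $U$, $A$ a fuzzy set on $U$, and $L:\mathbb{R}\times\mathbb{R}\to\mathbb{R}^+$ a loss function of $\lor$-type. Let $\hat{A}:U\to[0,1]$ be an optimal solution of the problem $$\text{minimize }\sum_{u\in U}L(A(u),\hat{A}(u))\quad\text{subject to } T(\widetilde{R}(u,v),\hat{A}(v))\le\hat{A}(u)\ (u,v\in U),\quad 0\le\hat{A}(u)\le1\ (u\in U).$$ Then for every $u\in U$: if $\hat{A}(u)>A(u)$, then $\hat{A}(u)=\max\{T(\widetilde{R}(u,v),\hat{A}(v)); v\in U, v\ne u\}$; and if $\hat{A}(u)<A(u)$, then $\hat{A}(u)=\min\{I(\widetilde{R}(v,u),\hat{A}(v)); v\in U, v\ne u\}$.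
   Context: A residual triplet $(T,I,N)$ consists of a left-continuous $t$-norm $T$, its residual implicator $I(x,y)=\sup\{\beta\in[0,1]: T(x,\beta)\le y\}$ and $N(x)=I(x,0)$. $\widetilde{R}:U\times U\to[0,1]$ is a $T$-preorder if reflexive and $T$-transitive ($T(\widetilde{R}(u,v),\widetilde{R}(v,w))\le\widetilde{R}(u,w)$). A fuzzy set on $U$ is a map $U\to[0,1]$. A loss function $L$ is of $\lor$-type if for every real $a$: $L(a,a)=0$; the functions $x\mapsto L(x,a)$ and $x\mapsto L(a,x)$ are increasing for $x>a$; and these functions are decreasing for $x<a$. *)

theory Defs
  imports Complex_Main
begin

text \<open>A t-norm on [0,1] (the function is total on reals; only values on [0,1] matter).\<close>
definition t_norm :: "(real \<Rightarrow> real \<Rightarrow> real) \<Rightarrow> bool" where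
  "t_norm T \<longleftrightarrow>
     (\<forall>x\<in>{0..1}. \<forall>y\<in>{0..1}. T x y \<in> {0..1}) \<and>
     (\<forall>x\<in>{0..1}. \<forall>y\<in>{0..1}. T x y = T y x) \<and>
     (\<forall>x\<in>{0..1}. \<forall>y\<in>{0..1}. \<forall>z\<in>{0..1}. T x (T y z) = T (T x y) z) \<and>
     (\<forall>x\<in>{0..1}. \<forall>y\<in>{0..1}. \<forall>z\<in>{0..1}. y \<le> z \<longrightarrow> T x y \<le> T x z) \<and>
     (\<forall>x\<in>{0..1}. T x 1 = x)"

text \<open>Left-continuity in the first argument (equivalently in each, by commutativity).\<close>
definition left_continuous_t_norm :: "(real \<Rightarrow> real \<Rightarrow> real) \<Rightarrow> bool" where
  "left_continuous_t_norm T \<longleftrightarrow> t_norm T \<and>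
     (\<forall>y\<in>{0..1}. \<forall>x\<in>{0<..1}. ((\<lambda>z. T z y) \<longlongrightarrow> T x y) (at_left x))"

definition residual_implicator :: "(real \<Rightarrow> real \<Rightarrow> real) \<Rightarrow> real \<Rightarrow> real \<Rightarrow> real" where
  "residual_implicator T x y = Sup {b \<in> {0..1}. T x b \<le> y}"

definition T_preorder :: "(real \<Rightarrow> real \<Rightarrow> real) \<Rightarrow> 'a set \<Rightarrow> ('a \<Rightarrow> 'a \<Rightarrow> real) \<Rightarrow> bool" where
  "T_preorder T U R \<longleftrightarrow>
     (\<forall>u\<in>U. \<forall>v\<in>U. R u v \<in> {0..1}) \<and>
     (\<forall>u\<in>U. R u u = 1) \<and>
     (\<forall>u\<in>U. \<forall>v\<in>U. \<forall>w\<in>U. T (R u v) (R v w) \<le> R u w)"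

definition fuzzy_set :: "'a set \<Rightarrow> ('a \<Rightarrow> real) \<Rightarrow> bool" where
  "fuzzy_set U A \<longleftrightarrow> (\<forall>u\<in>U. A u \<in> {0..1})"

text \<open>Loss function of \<or>-type (increasing/decreasing read as strict).\<close>
definition vee_type_loss :: "(real \<Rightarrow> real \<Rightarrow> real) \<Rightarrow> bool" where
  "vee_type_loss L \<longleftrightarrow>
     (\<forall>a. L a a = 0) \<and>
     (\<forall>a. strict_mono_on {a<..} (\<lambda>x. L x a)) \<and>
     (\<forall>a. strict_mono_on {a<..} (\<lambda>x. L a x)) \<and>
     (\<forall>a x y. x < y \<and> y < a \<longrightarrow> L x a > L y a) \<and>
     (\<forall>a x y. x < y \<and> y < a \<longrightarrow> L a x > L a y)"

definition feasible :: "(real \<Rightarrow> real \<Rightarrow> real) \<Rightarrow> 'a set \<Rightarrow> ('a \<Rightarrow> 'a \<Rightarrow> real) \<Rightarrow> ('a \<Rightarrow> real) \<Rightarrow> bool" where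
  "feasible T U R B \<longleftrightarrow>
     (\<forall>u\<in>U. \<forall>v\<in>U. T (R u v) (B v) \<le> B u) \<and> (\<forall>u\<in>U. 0 \<le> B u \<and> B u \<le> 1)"

definition optimal_solution ::
  "(real \<Rightarrow> real \<Rightarrow> real) \<Rightarrow> 'a set \<Rightarrow> ('a \<Rightarrow> 'a \<Rightarrow> real) \<Rightarrow> ('a \<Rightarrow> real)
    \<Rightarrow> (real \<Rightarrow> real \<Rightarrow> real) \<Rightarrow> ('a \<Rightarrow> real) \<Rightarrow> bool" where
  "optimal_solution T U R A L Ah \<longleftrightarrow> feasible T U R Ah \<and>
     (\<forall>B. feasible T U R B \<longrightarrow> (\<Sum>u\<in>U. L (A u) (Ah u)) \<le> (\<Sum>u\<in>U. L (A u) (B u)))"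

end

theory Submission
  imports Defs
begin

lemma tn_facts:
  assumes "t_norm T"
  shows "\<And>x y. x\<in>{0..1} \<Longrightarrow> y\<in>{0..1} \<Longrightarrow> T x y \<in> {0..1}"
    and "\<And>x y. x\<in>{0..1} \<Longrightarrow> y\<in>{0..1} \<Longrightarrow> T x y = T y x"
    and "\<And>x y z. x\<in>{0..1} \<Longrightarrow> y\<in>{0..1} \<Longrightarrow> z\<in>{0..1} \<Longrightarrow> y \<le> z \<Longrightarrow> T x y \<le> T x z"
    and "\<And>x. x\<in>{0..1} \<Longrightarrow> T x 1 = x"
    and "\<And>x. x\<in>{0..1} \<Longrightarrow> T 1 x = x"
    and "\<And>x. x\<in>{0..1} \<Longrightarrow> T x 0 = 0"
proof -
  note d = assms[unfolded t_norm_def]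
  show 1: "\<And>x y. x\<in>{0..1} \<Longrightarrow> y\<in>{0..1} \<Longrightarrow> T x y \<in> {0..1}" using d by blast
  show 2: "\<And>x y. x\<in>{0..1} \<Longrightarrow> y\<in>{0..1} \<Longrightarrow> T x y = T y x" using d by blast
  show 3: "\<And>x y z. x\<in>{0..1} \<Longrightarrow> y\<in>{0..1} \<Longrightarrow> z\<in>{0..1} \<Longrightarrow> y \<le> z \<Longrightarrow> T x y \<le> T x z" using d by blast
  show 4: "\<And>x. x\<in>{0..1} \<Longrightarrow> T x 1 = x" using d by blast
  show "\<And>x. x\<in>{0..1} \<Longrightarrow> T 1 x = x" using 2 4 by fastforce
  fix x :: real assume x: "x\<in>{0..1}"
  have "T x 0 = T 0 x" using 2 x by auto
  also have "\<dots> \<le> T 0 1" using 3 x by auto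
  also have "\<dots> = 0" using 4 by auto
  finally show "T x 0 = 0" using 1[of x 0] x by auto
qed

lemma resid:
  assumes lc: "left_continuous_t_norm T" and x: "x\<in>{0..1}" and y: "y\<in>{0..1}"
  shows "residual_implicator T x y \<in> {0..1}" and "T x (residual_implicator T x y) \<le> y"
    and "\<And>b. b\<in>{0..1} \<Longrightarrow> T x b \<le> y \<Longrightarrow> b \<le> residual_implicator T x y"
proof -
  have tn: "t_norm T" using lc unfolding left_continuous_t_norm_def by blast
  note f = tn_facts[OF tn]
  define S where "S = {b \<in> {0..1}. T x b \<le> y}"
  have r: "residual_implicator T x y = Sup S" unfolding S_def residual_implicator_def by simp
  have 0: "0 \<in> S" unfolding S_def using f(6)[OF x] y by auto
  have bdd: "bdd_above S" unfolding S_def by (auto intro: bdd_aboveI[where M=1])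
  show up: "\<And>b. b\<in>{0..1} \<Longrightarrow> T x b \<le> y \<Longrightarrow> b \<le> residual_implicator T x y"
  proof -
    fix b assume "b\<in>{0..1}" "T x b \<le> y"
    hence "b \<in> S" unfolding S_def by auto
    then show "b \<le> residual_implicator T x y" unfolding r using bdd by (rule cSup_upper)
  qed
  have s0: "0 \<le> Sup S" using 0 bdd by (meson cSup_upper)
  have s1: "Sup S \<le> 1" proof (rule cSup_least)
    show "S \<noteq> {}" using 0 by blast
  qed (auto simp: S_def)
  show "residual_implicator T x y \<in> {0..1}" using s0 s1 r by auto
  show "T x (residual_implicator T x y) \<le> y"
  proof (cases "Sup S = 0")
    case True then show ?thesis using 0 r unfolding S_def by auto
  next
    case False
    hence sp: "0 < Sup S" using s0 by auto
    have lim: "((\<lambda>z. T z x) \<longlongrightarrow> T (Sup S) x) (at_left (Sup S))"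
      using lc x sp s1 unfolding left_continuous_t_norm_def by auto
    have ev: "eventually (\<lambda>z. T z x \<le> y) (at_left (Sup S))"
      unfolding eventually_at_left[OF sp]
    proof (intro exI[of _ 0] conjI allI impI sp)
      fix z assume z0: "z > 0" and zs: "z < Sup S"
      obtain b where b: "b \<in> S" "z < b" using less_cSupD[of S z] zs 0 by blast
      have "T z x = T x z" using f(2) x z0 zs s1 by auto
      also have "\<dots> \<le> T x b" using f(3)[of x z b] x z0 zs s1 b by (auto simp: S_def)
      also have "\<dots> \<le> y" using b by (auto simp: S_def)
      finally show "T z x \<le> y" .
    qed
    have "T (Sup S) x \<le> y" by (rule tendsto_upperbound[OF lim ev]) simp
    then show ?thesis using f(2) x s0 s1 r by auto
  qed
qed

theorem lemma1:
  fixes U :: "'a set" and T L :: "real \<Rightarrow> real \<Rightarrow> real"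
    and R :: "'a \<Rightarrow> 'a \<Rightarrow> real" and A Ah :: "'a \<Rightarrow> real"
  assumes "finite U" and "U \<noteq> {}"
    and "left_continuous_t_norm T"
    and "T_preorder T U R"
    and "fuzzy_set U A"
    and "\<forall>a b. L a b \<ge> 0"
    and "vee_type_loss L"
    and "optimal_solution T U R A L Ah"
  shows "\<forall>u\<in>U.
           (Ah u > A u \<longrightarrow> Ah u = Max {T (R u v) (Ah v) | v. v \<in> U \<and> v \<noteq> u}) \<and>
           (Ah u < A u \<longrightarrow> Ah u = Min {residual_implicator T (R v u) (Ah v) | v. v \<in> U \<and> v \<noteq> u})"
proof -
  note fin = assms(1) and lc = assms(3)
  have tn: "t_norm T" using lc unfolding left_continuous_t_norm_def by blast
  note f = tn_facts[OF tn]
  have R01: "\<And>u v. u\<in>U \<Longrightarrow> v\<in>U \<Longrightarrow> R u v \<in> {0..1}" and Ruu: "\<And>u. u\<in>U \<Longrightarrow> R u u = 1"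
    using assms(4) unfolding T_preorder_def by auto
  have A01: "\<And>u. u\<in>U \<Longrightarrow> A u \<in> {0..1}" using assms(5) unfolding fuzzy_set_def by auto
  have feasAh: "feasible T U R Ah" and opt: "\<And>B. feasible T U R B \<Longrightarrow> (\<Sum>u\<in>U. L (A u) (Ah u)) \<le> (\<Sum>u\<in>U. L (A u) (B u))"
    using assms(8) unfolding optimal_solution_def by auto
  have con: "\<And>u v. u\<in>U \<Longrightarrow> v\<in>U \<Longrightarrow> T (R u v) (Ah v) \<le> Ah u"
    and Ah01: "\<And>u. u\<in>U \<Longrightarrow> Ah u \<in> {0..1}" using feasAh unfolding feasible_def by auto
  have Lnn: "\<And>a b. L a b \<ge> 0" using assms(6) by auto
  have Laa: "\<And>a. L a a = 0" and Linc: "\<And>a x y. a < x \<Longrightarrow> x < y \<Longrightarrow> L a x < L a y"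
    and Ldec: "\<And>a x y. x < y \<Longrightarrow> y < a \<Longrightarrow> L a x > L a y"
    using assms(7) unfolding vee_type_loss_def strict_mono_on_def by auto
  have Lstep: "L a x < L a y" if "a \<le> x" "x < y" for a x y
  proof (cases "a = x")
    case True
    have "L a ((a+y)/2) < L a y" using Linc[of a "(a+y)/2" y] that True by auto
    then show ?thesis using Lnn[of a "(a+y)/2"] Laa True by auto
  qed (use Linc that in auto)
  have Lstep2: "L a y < L a x" if "y \<le> a" "x < y" for a x y
  proof (cases "a = y")
    case True
    have "L a x > L a ((a+x)/2)" using Ldec[of x "(a+x)/2" a] that True by auto
    then show ?thesis using Lnn[of a "(a+x)/2"] Laa True by auto
  qed (use Ldec that in auto)
  have improve: False if u: "u\<in>U" and feasB: "feasible T U R (Ah(u:=b))" and lt: "L (A u) b < L (A u) (Ah u)" for u b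
  proof -
    have "(\<Sum>w\<in>U. L (A w) ((Ah(u:=b)) w)) = L (A u) b + (\<Sum>w\<in>U-{u}. L (A w) (Ah w))"
      using fin u by (simp add: sum.remove)
    also have "\<dots> < L (A u) (Ah u) + (\<Sum>w\<in>U-{u}. L (A w) (Ah w))" using lt by simp
    also have "\<dots> = (\<Sum>w\<in>U. L (A w) (Ah w))" using fin u by (simp add: sum.remove)
    finally show False using opt[OF feasB] by simp
  qed
  show ?thesis
  proof (intro ballI conjI impI)
    fix u assume u: "u \<in> U"
    define S where "S = {T (R u v) (Ah v) | v. v \<in> U \<and> v \<noteq> u}"
    have Sfin: "finite S" unfolding S_def using fin by auto
    have S01: "\<And>s. s \<in> S \<Longrightarrow> s \<in> {0..1}" unfolding S_def using f(1) R01 Ah01 u by fastforce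
    have Sle: "\<And>s. s \<in> S \<Longrightarrow> s \<le> Ah u" unfolding S_def using con u by blast
    assume gt: "Ah u > A u"
    define M where "M = (if S = {} then 0 else Max S)"
    have M01: "M \<in> {0..1}" unfolding M_def using S01 Sfin Max_in by auto
    have MS: "\<And>s. s\<in>S \<Longrightarrow> s \<le> M" unfolding M_def using Sfin by auto
    have MA: "M \<le> Ah u" unfolding M_def using Sle Sfin Max_in Ah01 u by auto
    show "Ah u = Max S"
    proof (rule ccontr)
      assume ne: "Ah u \<noteq> Max S"
      have Mlt: "M < Ah u"
      proof (cases "S = {}")
        case True then show ?thesis using MA gt A01[OF u] unfolding M_def by auto
      next
        case False then show ?thesis using MA ne unfolding M_def by auto
      qed
      define b where "b = max (A u) M"
      have b01: "b \<in> {0..1}" using A01 u M01 unfolding b_def by auto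
      have bAh: "b \<le> Ah u" using gt Mlt unfolding b_def by auto
      have "feasible T U R (Ah(u:=b))"
        unfolding feasible_def
      proof (intro conjI ballI)
        fix w v assume w: "w\<in>U" and v: "v\<in>U"
        show "T (R w v) ((Ah(u := b)) v) \<le> (Ah(u := b)) w"
        proof (cases "w = u")
          case True
          show ?thesis
          proof (cases "v = u")
            case True then show ?thesis using \<open>w = u\<close> Ruu u f(5) b01 by simp
          next
            case False
            have "T (R u v) (Ah v) \<in> S" unfolding S_def using v False by auto
            then show ?thesis using MS True False unfolding b_def by force
          qed
        next
          case False
          show ?thesis
          proof (cases "v = u")
            case True
            have "T (R w u) b \<le> T (R w u) (Ah u)" by (rule f(3)[OF R01[OF w u] b01 Ah01[OF u] bAh])
            then show ?thesis using con[OF w u] True False by simp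
          next
            case False then show ?thesis using con[OF w v] \<open>w \<noteq> u\<close> by simp
          qed
        qed
      next
        fix w assume w: "w \<in> U" show "0 \<le> (Ah(u := b)) w" using Ah01[OF w] b01 by simp
      next
        fix w assume w: "w \<in> U" show "(Ah(u := b)) w \<le> 1" using Ah01[OF w] b01 by simp
      qed
      moreover have "L (A u) b < L (A u) (Ah u)" using Lstep[of "A u" b "Ah u"] Mlt gt unfolding b_def by auto
      ultimately show False using improve u by blast
    qed
  next
    fix u assume u: "u \<in> U"
    define S where "S = {residual_implicator T (R v u) (Ah v) | v. v \<in> U \<and> v \<noteq> u}"
    have Sfin: "finite S" unfolding S_def using fin by auto
    have S01: "\<And>s. s \<in> S \<Longrightarrow> s \<in> {0..1}" unfolding S_def using resid(1)[OF lc] R01 Ah01 u by fastforce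
    have Sge: "Ah u \<le> s" if sS: "s \<in> S" for s
    proof -
      obtain v where v: "v \<in> U" "s = residual_implicator T (R v u) (Ah v)" using sS unfolding S_def by blast
      show ?thesis unfolding v(2) by (rule resid(3)[OF lc R01[OF v(1) u] Ah01[OF v(1)] Ah01[OF u] con[OF v(1) u]])
    qed
    assume lt: "Ah u < A u"
    define M where "M = (if S = {} then 1 else Min S)"
    have M01: "M \<in> {0..1}" unfolding M_def using S01 Sfin Min_in by auto
    have MS: "\<And>s. s\<in>S \<Longrightarrow> M \<le> s" unfolding M_def using Sfin by auto
    have MA: "Ah u \<le> M" unfolding M_def using Sge Sfin Min_in Ah01 u by auto
    show "Ah u = Min S"
    proof (rule ccontr)
      assume ne: "Ah u \<noteq> Min S"
      have Mlt: "Ah u < M"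
      proof (cases "S = {}")
        case True then show ?thesis using lt A01[OF u] unfolding M_def by auto
      next
        case False then show ?thesis using MA ne unfolding M_def by auto
      qed
      define b where "b = min (A u) M"
      have b01: "b \<in> {0..1}" using A01 u M01 Ah01 Mlt lt unfolding b_def by auto
      have bAh: "Ah u \<le> b" using lt Mlt unfolding b_def by auto
      have "feasible T U R (Ah(u:=b))"
        unfolding feasible_def
      proof (intro conjI ballI)
        fix w v assume w: "w\<in>U" and v: "v\<in>U"
        show "T (R w v) ((Ah(u := b)) v) \<le> (Ah(u := b)) w"
        proof (cases "v = u")
          case True
          show ?thesis
          proof (cases "w = u")
            case True then show ?thesis using \<open>v = u\<close> Ruu u f(5) b01 by simp
          next
            case False
            have "residual_implicator T (R w u) (Ah w) \<in> S" unfolding S_def using w False by auto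
            hence "b \<le> residual_implicator T (R w u) (Ah w)" using MS unfolding b_def by force
            hence "T (R w u) b \<le> T (R w u) (residual_implicator T (R w u) (Ah w))"
              by (rule f(3)[OF R01[OF w u] b01 resid(1)[OF lc R01[OF w u] Ah01[OF w]]])
            also have "\<dots> \<le> Ah w" by (rule resid(2)[OF lc R01[OF w u] Ah01[OF w]])
            finally show ?thesis using True False by simp
          qed
        next
          case False
          show ?thesis
          proof (cases "w = u")
            case True
            then show ?thesis using con[OF w v] False bAh by simp
          next
            case False then show ?thesis using con[OF w v] \<open>v \<noteq> u\<close> by simp
          qed
        qed
      next
        fix w assume w: "w \<in> U" show "0 \<le> (Ah(u := b)) w" using Ah01[OF w] b01 by simp
      next
        fix w assume w: "w \<in> U" show "(Ah(u := b)) w \<le> 1" using Ah01[OF w] b01 by simp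
      qed
      moreover have "L (A u) b < L (A u) (Ah u)" using Lstep2[of b "A u" "Ah u"] Mlt lt unfolding b_def by auto
      ultimately show False using improve u by blast
    qed
  qed
qed

end
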